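(* Let $G$ be a finite group of order $mn$ and let $H$ be a (not necessarily normal) subgroup of $G$ of order $n$. Suppose $T=\{D_1,\dots,D_s\}$ is a family of pairwise disjoint $k$-subsets of $G$ such that (i) each $D_i$ is an $(m,n,k,\lambda)$-relative difference set in $G$ relative to $H$, and (ii) $T$ partitions $G\setminus H$. Then $T$ is an $(mn,s,k,s\lambda,0)$-DPDF and an $(mn,s,k,mn-2n-s\lambda,mn-n)$-EPDF in $G$.
   Context: Groups are written multiplicatively with identity $e$; $G^*=G\setminus\{e\}$. For $D\subseteq G$, $\Delta(D)$ is the multiset $\{xy^{-1}: x,y\in D, x\ne y\}$; for $D_1,D_2\subseteq G$, $\Delta(D_1,D_2)$ is the multiset $\{xy^{-1}:x\in D_1,y\in D_2\}$. If $|G|=mn$ and $H$ is a subgroup of order $n$ (here not required to be normal), a $k$-subset $R$ is an $(m,n,k,\lambda)$-relative difference set relative to $H$ if $\Delta(R)$ contains each element of $G\setminus H$ exactly $\lambda$ times and no element of $H\setminus\{e\}$. For a family $A=\{A_1,\dots,A_s\}$ of pairwise disjoint subsets, ${\rm Int}(A)=\bigcup_i\Delta(A_i)$ and ${\rm Ext}(A)=\bigcup_{i\ne j}\Delta(A_i,A_j)$ (multiset unions). For $|G|=v$, a $(v,s,k,\lambda,\mu)$-DPDF is a family of $s$ pairwise disjoint $k$-subsets of $G^*$ with union $S$ such that ${\rm Int}(A)$ contains each element of $S$ exactly $\lambda$ times and each element of $G\setminus(S\cup\{e\})$ exactly $\mu$ times; a $(v,s,k,\lambda,\mu)$-EPDF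 is defined the same way using ${\rm Ext}(A)$. A family partitions a set $X$ if its members are pairwise disjoint with union $X$. *)

theory Defs
  imports "HOL-Algebra.Coset" "HOL-Library.Multiset"
begin

definition diff_mset :: "('a, 'b) monoid_scheme \<Rightarrow> 'a set \<Rightarrow> 'a set \<Rightarrow> 'a multiset" where
  "diff_mset G A B = image_mset (\<lambda>(x, y). x \<otimes>\<^bsub>G\<^esub> inv\<^bsub>G\<^esub> y) (mset_set (A \<times> B))"

definition Delta :: "('a, 'b) monoid_scheme \<Rightarrow> 'a set \<Rightarrow> 'a multiset" where
  "Delta G D = image_mset (\<lambda>(x, y). x \<otimes>\<^bsub>G\<^esub> inv\<^bsub>G\<^esub> y)
                 (mset_set {(x, y). x \<in> D \<and> y \<in> D \<and> x \<noteq> y})"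

definition rel_diff_set ::
  "('a, 'b) monoid_scheme \<Rightarrow> 'a set \<Rightarrow> nat \<Rightarrow> nat \<Rightarrow> nat \<Rightarrow> nat \<Rightarrow> 'a set \<Rightarrow> bool" where
  "rel_diff_set G H m n k lam R \<longleftrightarrow>
     finite (carrier G) \<and> order G = m * n \<and> subgroup H G \<and> card H = n \<and>
     R \<subseteq> carrier G \<and> card R = k \<and>
     (\<forall>g \<in> carrier G - H. count (Delta G R) g = lam) \<and>
     (\<forall>g \<in> H - {\<one>\<^bsub>G\<^esub>}. count (Delta G R) g = 0)"

text \<open>Families are indexed: A 0, ..., A (s-1).\<close>
definition Int_mset :: "('a, 'b) monoid_scheme \<Rightarrow> (nat \<Rightarrow> 'a set) \<Rightarrow> nat \<Rightarrow> 'a multiset" where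
  "Int_mset G A s = (\<Sum>i<s. Delta G (A i))"

definition Ext_mset :: "('a, 'b) monoid_scheme \<Rightarrow> (nat \<Rightarrow> 'a set) \<Rightarrow> nat \<Rightarrow> 'a multiset" where
  "Ext_mset G A s = (\<Sum>i<s. \<Sum>j<s. if i \<noteq> j then diff_mset G (A i) (A j) else {#})"

definition pdf_with ::
  "('a, 'b) monoid_scheme \<Rightarrow> 'a multiset \<Rightarrow> nat \<Rightarrow> nat \<Rightarrow> nat \<Rightarrow> int \<Rightarrow> int \<Rightarrow> (nat \<Rightarrow> 'a set) \<Rightarrow> bool" where
  "pdf_with G M v s k lam mu A \<longleftrightarrow>
     finite (carrier G) \<and> order G = v \<and>
     (\<forall>i<s. A i \<subseteq> carrier G - {\<one>\<^bsub>G\<^esub>} \<and> card (A i) = k) \<and>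
     (\<forall>i<s. \<forall>j<s. i \<noteq> j \<longrightarrow> A i \<inter> A j = {}) \<and>
     (\<forall>x \<in> (\<Union>i<s. A i). int (count M x) = lam) \<and>
     (\<forall>x \<in> carrier G - ((\<Union>i<s. A i) \<union> {\<one>\<^bsub>G\<^esub>}). int (count M x) = mu)"

definition DPDF ::
  "('a, 'b) monoid_scheme \<Rightarrow> nat \<Rightarrow> nat \<Rightarrow> nat \<Rightarrow> int \<Rightarrow> int \<Rightarrow> (nat \<Rightarrow> 'a set) \<Rightarrow> bool" where
  "DPDF G v s k lam mu A \<longleftrightarrow> pdf_with G (Int_mset G A s) v s k lam mu A"

definition EPDF ::
  "('a, 'b) monoid_scheme \<Rightarrow> nat \<Rightarrow> nat \<Rightarrow> nat \<Rightarrow> int \<Rightarrow> int \<Rightarrow> (nat \<Rightarrow> 'a set) \<Rightarrow> bool" where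
  "EPDF G v s k lam mu A \<longleftrightarrow> pdf_with G (Ext_mset G A s) v s k lam mu A"

end

theory Submission
  imports Defs
begin

lemma cnt_img: "finite A \<Longrightarrow> count (image_mset f (mset_set A)) x = card {p\<in>A. f p = x}"
proof -
  assume fA: "finite A"
  have "count (image_mset f (mset_set A)) x = (\<Sum>y\<in>f -` {x} \<inter> A. 1)"
    using fA by (simp add: count_image_mset count_mset_set)
  also have "\<dots> = card (f -` {x} \<inter> A)" by simp
  also have "f -` {x} \<inter> A = {p\<in>A. f p = x}" by auto
  finally show ?thesis .
qed

lemma diff_un_left:
  "finite A \<Longrightarrow> finite A' \<Longrightarrow> finite B \<Longrightarrow> A \<inter> A' = {} \<Longrightarrow>
   diff_mset G (A \<union> A') B = diff_mset G A B + diff_mset G A' B"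
proof -
  assume a: "finite A" "finite A'" "finite B" "A \<inter> A' = {}"
  have "(A \<union> A') \<times> B = A \<times> B \<union> A' \<times> B" by auto
  moreover have "mset_set (A \<times> B \<union> A' \<times> B) = mset_set (A \<times> B) + mset_set (A' \<times> B)"
    using a by (intro mset_set_Union) auto
  ultimately show ?thesis unfolding diff_mset_def by simp
qed

lemma diff_un_right:
  "finite A \<Longrightarrow> finite B \<Longrightarrow> finite B' \<Longrightarrow> B \<inter> B' = {} \<Longrightarrow>
   diff_mset G A (B \<union> B') = diff_mset G A B + diff_mset G A B'"
proof -
  assume a: "finite A" "finite B" "finite B'" "B \<inter> B' = {}"
  have "A \<times> (B \<union> B') = A \<times> B \<union> A \<times> B'" by auto
  moreover have "mset_set (A \<times> B \<union> A \<times> B') = mset_set (A \<times> B) + mset_set (A \<times> B')"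
    using a by (intro mset_set_Union) auto
  ultimately show ?thesis unfolding diff_mset_def by simp
qed

lemma diff_UN_left:
  fixes s :: nat
  assumes "\<forall>i<s. finite (D i)" "finite B" "\<forall>i<s. \<forall>j<s. i \<noteq> j \<longrightarrow> D i \<inter> D j = {}"
  shows "diff_mset G (\<Union>i<s. D i) B = (\<Sum>i<s. diff_mset G (D i) B)"
  using assms
proof (induction s)
  case 0
  then show ?case by (simp add: diff_mset_def)
next
  case (Suc s)
  have e: "(\<Union>i<Suc s. D i) = (\<Union>i<s. D i) \<union> D s" by (auto simp: lessThan_Suc)
  have "D i \<inter> D s = {}" if "i < s" for i using Suc.prems(3) that by auto
  then have d: "(\<Union>i<s. D i) \<inter> D s = {}" by blast
  show ?case unfolding e using Suc by (subst diff_un_left) (auto simp: d)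
qed

lemma diff_UN_right:
  fixes s :: nat
  assumes "\<forall>i<s. finite (D i)" "finite A" "\<forall>i<s. \<forall>j<s. i \<noteq> j \<longrightarrow> D i \<inter> D j = {}"
  shows "diff_mset G A (\<Union>i<s. D i) = (\<Sum>i<s. diff_mset G A (D i))"
  using assms
proof (induction s)
  case 0
  then show ?case by (simp add: diff_mset_def)
next
  case (Suc s)
  have e: "(\<Union>i<Suc s. D i) = (\<Union>i<s. D i) \<union> D s" by (auto simp: lessThan_Suc)
  have "D i \<inter> D s = {}" if "i < s" for i using Suc.prems(3) that by auto
  then have d: "(\<Union>i<s. D i) \<inter> D s = {}" by blast
  show ?case unfolding e using Suc by (subst diff_un_right) (auto simp: d)
qed

lemma sum_split_ext:
  fixes f :: "nat \<Rightarrow> nat \<Rightarrow> 'a multiset"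
  shows "(\<Sum>i<s. \<Sum>j<s. f i j) = (\<Sum>i<s. \<Sum>j<s. if i \<noteq> j then f i j else {#}) + (\<Sum>i<s. f i i)"
proof -
  have "(\<Sum>j<s. f i j) = (\<Sum>j<s. if i \<noteq> j then f i j else {#}) + f i i" if "i < s" for i
  proof -
    have "(\<Sum>j<s. if i \<noteq> j then f i j else {#}) = sum (f i) {j\<in>{..<s}. i \<noteq> j}"
      by (subst sum.inter_filter) auto
    also have "{j\<in>{..<s}. i \<noteq> j} = {..<s} - {i}" by auto
    finally show ?thesis using that by (simp add: sum.remove add.commute)
  qed
  then show ?thesis by (simp add: sum.distrib[symmetric])
qed

lemma (in group) diag_count:
  assumes "A \<subseteq> carrier G" "finite A" "x \<noteq> \<one>"
  shows "count (diff_mset G A A) x = count (Delta G A) x"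
proof -
  have "{p\<in>A \<times> A. (\<lambda>(a, b). a \<otimes> inv b) p = x}
      = {p\<in>{(a, b). a \<in> A \<and> b \<in> A \<and> a \<noteq> b}. (\<lambda>(a, b). a \<otimes> inv b) p = x}"
    using assms by (auto simp: r_inv)
  moreover have "finite {(a, b). a \<in> A \<and> b \<in> A \<and> a \<noteq> b}"
    by (rule finite_subset[of _ "A \<times> A"]) (use assms in auto)
  ultimately show ?thesis unfolding diff_mset_def Delta_def
    using assms by (simp add: cnt_img)
qed

lemma (in group) full_count:
  assumes "B \<subseteq> carrier G" "finite B" "x \<in> carrier G"
  shows "count (diff_mset G B B) x = card {b\<in>B. x \<otimes> b \<in> B}"
proof -
  have "{p\<in>B \<times> B. (\<lambda>(a, b). a \<otimes> inv b) p = x} = (\<lambda>b. (x \<otimes> b, b)) ` {b\<in>B. x \<otimes> b \<in> B}"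
  proof (intro equalityI subsetI)
    fix p assume p: "p \<in> {p\<in>B \<times> B. (\<lambda>(a, b). a \<otimes> inv b) p = x}"
    then obtain a b where ab: "p = (a, b)" "a \<in> B" "b \<in> B" "a \<otimes> inv b = x" by auto
    have "a = x \<otimes> b" using ab assms
      by (metis inv_solve_right subsetD)
    then show "p \<in> (\<lambda>b. (x \<otimes> b, b)) ` {b\<in>B. x \<otimes> b \<in> B}" using ab by auto
  next
    fix p assume "p \<in> (\<lambda>b. (x \<otimes> b, b)) ` {b\<in>B. x \<otimes> b \<in> B}"
    then obtain b where b: "p = (x \<otimes> b, b)" "b \<in> B" "x \<otimes> b \<in> B" by auto
    have "x \<otimes> b \<otimes> inv b = x" using b assms by (simp add: m_assoc subsetD)
    then show "p \<in> {p\<in>B \<times> B. (\<lambda>(a, b). a \<otimes> inv b) p = x}" using b by auto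
  qed
  moreover have "inj_on (\<lambda>b. (x \<otimes> b, b)) {b\<in>B. x \<otimes> b \<in> B}" by (auto intro: inj_onI)
  ultimately show ?thesis unfolding diff_mset_def using assms by (simp add: cnt_img card_image)
qed

lemma (in group) main_aux:
  fixes H :: "'a set" and D :: "nat \<Rightarrow> 'a set"
    and m n k s lam :: nat
  assumes "True"
    and "finite (carrier G)"
    and "order G = m * n"
    and "subgroup H G"
    and "card H = n"
    and "\<forall>i<s. D i \<subseteq> carrier G \<and> card (D i) = k"
    and "\<forall>i<s. \<forall>j<s. i \<noteq> j \<longrightarrow> D i \<inter> D j = {}"
    and "\<forall>i<s. rel_diff_set G H m n k lam (D i)"
    and "(\<Union>i<s. D i) = carrier G - H"
  shows "DPDF G (m * n) s k (int s * int lam) 0 D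
       \<and> EPDF G (m * n) s k (int (m * n) - 2 * int n - int s * int lam) (int (m * n) - int n) D"
proof -
  define S where "S = (\<Union>i<s. D i)"
  have S: "S = carrier G - H" using assms(9) S_def by simp
  have Hc: "H \<subseteq> carrier G" using assms(4) subgroup.subset by blast
  have oneH: "\<one> \<in> H" using assms(4) subgroup.one_closed by blast
  have cardG: "card (carrier G) = m * n" using assms(3) unfolding order_def .
  have finD: "\<forall>i<s. finite (D i)" using assms(2,6) finite_subset by blast
  have DS: "\<forall>i<s. D i \<subseteq> S" using S_def by blast
  have finS: "finite S" using S assms(2) by simp
  have Sc: "S \<subseteq> carrier G" using S by blast
  have rd: "\<forall>i<s. (\<forall>g \<in> carrier G - H. count (Delta G (D i)) g = lam) \<and>
      (\<forall>g \<in> H - {\<one>}. count (Delta G (D i)) g = 0)"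
    using assms(8) unfolding rel_diff_set_def by blast
  have E1: "diff_mset G S S = (\<Sum>i<s. \<Sum>j<s. diff_mset G (D i) (D j))"
    unfolding S_def
    using finD assms(7)
    by (simp add: diff_UN_left diff_UN_right finite_UN_I) (rule sum.swap)
  have E2: "diff_mset G S S = Ext_mset G D s + (\<Sum>i<s. diff_mset G (D i) (D i))"
    unfolding E1 Ext_mset_def by (rule sum_split_ext)
  have key: "count (diff_mset G S S) x = count (Ext_mset G D s) x + (\<Sum>i<s. count (Delta G (D i)) x)"
    if "x \<in> carrier G" "x \<noteq> \<one>" for x
  proof -
    have "(\<Sum>i<s. count (diff_mset G (D i) (D i)) x) = (\<Sum>i<s. count (Delta G (D i)) x)"
      using diag_count finD assms(6) that by (intro sum.cong) auto
    then show ?thesis unfolding E2 by (simp add: count_sum)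
  qed
  have cnt_out: "(\<Sum>i<s. count (Delta G (D i)) x) = s * lam" if "x \<in> carrier G - H" for x
    using rd that by simp
  have cnt_in: "(\<Sum>i<s. count (Delta G (D i)) x) = 0" if "x \<in> H - {\<one>}" for x
    using rd that by simp
  have full_in: "count (diff_mset G S S) x = m * n - n" if "x \<in> H" for x
  proof -
    have xc: "x \<in> carrier G" using that Hc by blast
    have "x \<otimes> b \<in> S" if b: "b \<in> S" for b
    proof -
      have bc: "b \<in> carrier G" using b Sc by blast
      have "x \<otimes> b \<notin> H"
      proof
        assume "x \<otimes> b \<in> H"
        then have "inv x \<otimes> (x \<otimes> b) \<in> H"
          using \<open>x \<in> H\<close> subgroup.m_closed[OF assms(4)] subgroup.m_inv_closed[OF assms(4)] by simp
        moreover have "inv x \<otimes> (x \<otimes> b) = b" using xc bc by (simp add: m_assoc[symmetric])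
        ultimately show False using b S by simp
      qed
      then show ?thesis using xc bc S by simp
    qed
    then have e: "{b\<in>S. x \<otimes> b \<in> S} = S" by blast
    have "card S = m * n - n" using S cardG assms(5) card_Diff_subset[OF finite_subset[OF Hc assms(2)] Hc]
      by simp
    then show ?thesis using full_count[OF Sc finS xc] e by simp
  qed
  have full_out: "count (diff_mset G S S) x = m * n - n - n \<and> n + n \<le> m * n" if "x \<in> carrier G - H" for x
  proof -
    define C where "C = (\<lambda>h. inv x \<otimes> h) ` H"
    have "{b\<in>S. x \<otimes> b \<in> S} = S - C"
    proof (intro equalityI subsetI)
      fix b assume b: "b \<in> {b\<in>S. x \<otimes> b \<in> S}"
      show "b \<in> S - C"
      proof
        show "b \<in> S" using b by simp
        show "b \<notin> C"
        proof
          assume "b \<in> C"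
          then obtain h where h: "h \<in> H" "b = inv x \<otimes> h" unfolding C_def by auto
          have hc: "h \<in> carrier G" using h Hc by blast
          have "x \<otimes> b = h" using h(2) hc that by (simp add: m_assoc[symmetric])
          then show False using b h S by auto
        qed
      qed
    next
      fix b assume b: "b \<in> S - C"
      then have bc: "b \<in> carrier G" using Sc by auto
      have "x \<otimes> b \<notin> H"
      proof
        assume xb: "x \<otimes> b \<in> H"
        have "b = inv x \<otimes> (x \<otimes> b)" using bc that by (simp add: m_assoc[symmetric])
        then have "b \<in> C" unfolding C_def using xb by blast
        then show False using b by simp
      qed
      then show "b \<in> {b\<in>S. x \<otimes> b \<in> S}" using b bc that S by auto
    qed
    moreover have CS: "C \<subseteq> S"
    proof
      fix c assume "c \<in> C"
      then obtain h where h: "h \<in> H" "c = inv x \<otimes> h" unfolding C_def by auto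
      have cc: "c \<in> carrier G" using h that Hc by auto
      have "c \<notin> H"
      proof
        assume "c \<in> H"
        then have "inv c \<in> H" using subgroup.m_inv_closed[OF assms(4)] by simp
        then have "h \<otimes> inv c \<in> H" using h subgroup.m_closed[OF assms(4)] by simp
        moreover have "h \<otimes> inv c = x"
        proof -
          have hc: "h \<in> carrier G" using h Hc by blast
          have xc: "x \<in> carrier G" using that by blast
          have "h \<otimes> inv c = h \<otimes> (inv h \<otimes> x)" using h(2) hc xc by (simp add: inv_mult_group)
          also have "\<dots> = x" using hc xc by (simp add: m_assoc[symmetric])
          finally show ?thesis .
        qed
        ultimately show False using that by simp
      qed
      then show "c \<in> S" using cc S by simp
    qed
    moreover have "card C = n"
    proof -
      have "inj_on (\<lambda>h. inv x \<otimes> h) H"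
      proof (rule inj_onI)
        fix a b assume "a \<in> H" "b \<in> H" "inv x \<otimes> a = inv x \<otimes> b"
        moreover have "a \<in> carrier G" "b \<in> carrier G" "inv x \<in> carrier G"
          using \<open>a \<in> H\<close> \<open>b \<in> H\<close> Hc that by auto
        ultimately show "a = b" using Units_l_cancel[of "inv x" a b] Units_eq by simp
      qed
      then show ?thesis unfolding C_def using assms(5) by (simp add: card_image)
    qed
    moreover have "card S = m * n - n" using S cardG assms(5) card_Diff_subset[OF finite_subset[OF Hc assms(2)] Hc]
      by simp
    moreover have "card (S - C) = card S - card C"
      using CS finS by (meson card_Diff_subset finite_subset)
    moreover have "card C \<le> card S" using CS finS by (simp add: card_mono)
    ultimately show ?thesis using full_count[OF Sc finS] that
      by simp
  qed
  have nle: "n \<le> m * n" using card_mono[OF assms(2) Hc] cardG assms(5) by simp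
  have common: "\<forall>i<s. D i \<subseteq> carrier G - {\<one>} \<and> card (D i) = k"
    using DS S oneH assms(6) by blast
  have dp: "DPDF G (m * n) s k (int s * int lam) 0 D"
    unfolding DPDF_def pdf_with_def Int_mset_def
  proof (intro conjI)
    show "\<forall>x\<in>\<Union>i<s. D i. int (count (\<Sum>i<s. Delta G (D i)) x) = int s * int lam"
      using cnt_out assms(9) by (simp add: count_sum)
    show "\<forall>x\<in>carrier G - ((\<Union>i<s. D i) \<union> {\<one>}). int (count (\<Sum>i<s. Delta G (D i)) x) = 0"
      using cnt_in assms(9) by (auto simp: count_sum)
  qed (use assms(2,3,7) common in auto)
  have ep: "EPDF G (m * n) s k (int (m * n) - 2 * int n - int s * int lam) (int (m * n) - int n) D"
    unfolding EPDF_def pdf_with_def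
  proof (intro conjI)
    show "\<forall>x\<in>\<Union>i<s. D i. int (count (Ext_mset G D s) x) = int (m * n) - 2 * int n - int s * int lam"
    proof
      fix x assume "x \<in> (\<Union>i<s. D i)"
      then have x: "x \<in> carrier G - H" using assms(9) by simp
      then have "x \<noteq> \<one>" using oneH by auto
      then have "m * n - n - n = count (Ext_mset G D s) x + s * lam"
        using key[of x] x cnt_out[OF x] full_out[OF x] by simp
      then show "int (count (Ext_mset G D s) x) = int (m * n) - 2 * int n - int s * int lam"
      proof -
        have le: "n + n \<le> m * n" using full_out[OF x] by simp
        have i1: "int (m * n - n - n) = int (count (Ext_mset G D s) x) + int s * int lam"
          using \<open>m * n - n - n = count (Ext_mset G D s) x + s * lam\<close> by simp
        have i2: "int (m * n - n - n) = int (m * n) - 2 * int n" using le by (simp add: of_nat_diff)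
        show ?thesis using i1 i2 by linarith
      qed
    qed
    show "\<forall>x\<in>carrier G - ((\<Union>i<s. D i) \<union> {\<one>}). int (count (Ext_mset G D s) x) = int (m * n) - int n"
    proof
      fix x assume "x \<in> carrier G - ((\<Union>i<s. D i) \<union> {\<one>})"
      then have x: "x \<in> H - {\<one>}" using assms(9) by auto
      then have xc: "x \<in> carrier G" using Hc by auto
      then have "m * n - n = count (Ext_mset G D s) x"
        using key[of x] x cnt_in[OF x] full_in[of x] by simp
      then show "int (count (Ext_mset G D s) x) = int (m * n) - int n"
        using nle by linarith
    qed
  qed (use assms(2,3,7) common in auto)
  show ?thesis using dp ep by blast
qed

theorem mainTheorem7:
  fixes G :: "('a, 'b) monoid_scheme" and H :: "'a set" and D :: "nat \<Rightarrow> 'a set"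
    and m n k s lam :: nat
  assumes "group G"
    and "finite (carrier G)"
    and "order G = m * n"
    and "subgroup H G"
    and "card H = n"
    and "\<forall>i<s. D i \<subseteq> carrier G \<and> card (D i) = k"
    and "\<forall>i<s. \<forall>j<s. i \<noteq> j \<longrightarrow> D i \<inter> D j = {}"
    and "\<forall>i<s. rel_diff_set G H m n k lam (D i)"
    and "(\<Union>i<s. D i) = carrier G - H"
  shows "DPDF G (m * n) s k (int s * int lam) 0 D
       \<and> EPDF G (m * n) s k (int (m * n) - 2 * int n - int s * int lam) (int (m * n) - int n) D"
  using group.main_aux[OF assms(1) _ assms(2-9)] by simp

end
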